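(* Let $m\ge2$ be even and $V$ a finite-dimensional $\mathbb{K}$-vector space with ordered basis. Then there is a filtration $$\{0\}=\mathrm{HPf}^{(m,1)}(V)\subseteq\mathrm{HPf}^{(m,2)}(V)\subseteq\dots\subseteq\mathrm{HPf}^{(m,l)}(V)\subseteq\mathrm{HPf}^{(m,l+1)}(V)\subseteq\dots\subseteq\textstyle\bigwedge^mV$$ which is exhaustive: $\mathrm{HPf}^{(m,L)}(V)=\bigwedge^mV$ for all sufficiently large $L$.
   Context: Let the basis be $(e_i)_{i\in B}$, $B$ totally ordered. For $x\in\bigwedge^mV$ write $x=\sum_Ix_Ie_I$, $e_I=e_{i_1}\wedge\dots\wedge e_{i_m}$ for $I=\{i_1<\dots<i_m\}$. For $A\subseteq B$ with $|A|=mk$, $\mathrm{hpf}^{(m,k)}_A(x)=\sum\mathrm{sgn}(I_1,\dots,I_k)x_{I_1}\cdots x_{I_k}$, summed over unordered partitions of $A$ into $m$-sets $I_1,\dots,I_k$, with $\mathrm{sgn}$ the sign of the permutation of $A$ listing $I_1,\dots,I_k$ successively, each increasingly. $\mathrm{HPf}^{(m,k)}(V)$ is the set of $x\in\bigwedge^mV$ with $\mathrm{hpf}^{(m,k)}_A(x)=0$ for all $A\subseteq B$, $|A|=mk$. *)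

theory Defs
  imports Main
begin

text \<open>Coordinates: the basis of V is indexed by a finite linearly ordered set B.
  An element x of the m-th exterior power is given by its coefficients x I on the
  basis vectors e_I, I an m-subset of B (x I = 0 for all other sets I).\<close>

definition wedge_space :: "nat \<Rightarrow> 'b::linorder set \<Rightarrow> ('b set \<Rightarrow> 'k::field) set" where
  "wedge_space m B = {x. \<forall>I. x I \<noteq> 0 \<longrightarrow> I \<subseteq> B \<and> card I = m}"

definition m_partitions :: "nat \<Rightarrow> 'b set \<Rightarrow> 'b set set set" where
  "m_partitions m A = {P. (\<forall>I\<in>P. I \<subseteq> A \<and> card I = m) \<and> \<Union>P = A \<and>
      (\<forall>I\<in>P. \<forall>J\<in>P. I \<noteq> J \<longrightarrow> I \<inter> J = {})}"

text \<open>Sign of the permutation of A given by listing the elements in the order of the word xs: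
  (-1) to the number of inversions.\<close>
definition inversions :: "'b::linorder list \<Rightarrow> nat" where
  "inversions xs = card {(i, j). i < j \<and> j < length xs \<and> xs ! j < xs ! i}"

definition word_sign :: "'b::linorder list \<Rightarrow> 'k::field" where
  "word_sign xs = (-1) ^ inversions xs"

text \<open>Blocks listed in a fixed order (by their minimal elements), each block increasingly.
  For even m the sign does not depend on the order of the blocks.\<close>
definition partition_word :: "'b::linorder set set \<Rightarrow> 'b list" where
  "partition_word P = concat (map sorted_list_of_set (sorted_key_list_of_set Min P))"

definition hpf :: "nat \<Rightarrow> nat \<Rightarrow> 'b::linorder set \<Rightarrow> ('b set \<Rightarrow> 'k::field) \<Rightarrow> 'k" where
  "hpf m k A x = (\<Sum>P\<in>m_partitions m A. word_sign (partition_word P) * (\<Prod>I\<in>P. x I))"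

definition HPf :: "nat \<Rightarrow> nat \<Rightarrow> 'b::linorder set \<Rightarrow> ('b set \<Rightarrow> 'k::field) set" where
  "HPf m k B = {x \<in> wedge_space m B. \<forall>A. A \<subseteq> B \<and> card A = m * k \<longrightarrow> hpf m k A x = 0}"

end

theory Submission
  imports Defs
begin

lemma inversions_append:
  "inversions (xs @ ys) = inversions xs + inversions ys +
     card {(i,j). i < length xs \<and> j < length ys \<and> ys!j < xs!i}"
proof -
  define n where "n = length xs"
  define N where "N = length xs + length ys"
  define S where "S = {(i,j). i < j \<and> j < N \<and> (xs@ys)!j < (xs@ys)!i}"
  define S1 where "S1 = {(i,j). i < j \<and> j < length xs \<and> xs!j < xs!i}"
  define T2 where "T2 = {(i,j). i < j \<and> j < length ys \<and> ys!j < ys!i}"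
  define T3 where "T3 = {(i,j). i < length xs \<and> j < length ys \<and> ys!j < xs!i}"
  define S2 where "S2 = (\<lambda>(i,j). (i+n, j+n)) ` T2"
  define S3 where "S3 = (\<lambda>(i,j). (i, j+n)) ` T3"
  have fin: "finite S1" "finite T2" "finite T3"
  proof -
    show "finite S1" by (rule finite_subset[of _ "{..<length xs} \<times> {..<length xs}"]) (auto simp: S1_def)
    show "finite T2" by (rule finite_subset[of _ "{..<length ys} \<times> {..<length ys}"]) (auto simp: T2_def)
    show "finite T3" by (rule finite_subset[of _ "{..<length xs} \<times> {..<length ys}"]) (auto simp: T3_def)
  qed
  have SU: "S = S1 \<union> S2 \<union> S3"
  proof (intro equalityI subsetI)
    fix p assume "p \<in> S"
    then obtain i j where p: "p = (i,j)" "i < j" "j < N" "(xs@ys)!j < (xs@ys)!i"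
      by (auto simp: S_def)
    consider "j < n" | "n \<le> i" | "i < n" "n \<le> j" by linarith
    then show "p \<in> S1 \<union> S2 \<union> S3"
    proof cases
      case 1 then show ?thesis using p by (auto simp: S1_def nth_append n_def)
    next
      case 2
      have "(i-n, j-n) \<in> T2" using p 2 by (auto simp: T2_def nth_append n_def N_def)
      then have "(\<lambda>(i,j). (i+n, j+n)) (i-n, j-n) \<in> S2" unfolding S2_def by blast
      then show ?thesis using p 2 by auto
    next
      case 3
      have "(i, j-n) \<in> T3" using p 3 by (auto simp: T3_def nth_append n_def N_def)
      then have "(\<lambda>(i,j). (i, j+n)) (i, j-n) \<in> S3" unfolding S3_def by blast
      then show ?thesis using p 3 by auto
    qed
  next
    fix p assume "p \<in> S1 \<union> S2 \<union> S3"
    then show "p \<in> S"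
      by (auto simp: S_def S1_def S2_def S3_def T2_def T3_def nth_append n_def N_def)
  qed
  have c2: "card S2 = card T2" unfolding S2_def
    by (rule card_image) (auto simp: inj_on_def)
  have c3: "card S3 = card T3" unfolding S3_def
    by (rule card_image) (auto simp: inj_on_def)
  have d1: "S1 \<inter> S2 = {}" "S1 \<inter> S3 = {}" "S2 \<inter> S3 = {}"
    by (auto simp: S1_def S2_def S3_def T2_def T3_def n_def)
  have f2: "finite S2" "finite S3" using fin by (auto simp: S2_def S3_def)
  have "card S = card S1 + card S2 + card S3"
    unfolding SU using d1 fin f2
    by (subst card_Un_disjoint) (auto simp: card_Un_disjoint)
  moreover have "inversions (xs @ ys) = card S" unfolding inversions_def S_def N_def by simp
  moreover have "inversions xs = card S1" unfolding inversions_def S1_def by simp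
  moreover have "inversions ys = card T2" unfolding inversions_def T2_def by simp
  ultimately show ?thesis using c2 c3 by (simp add: T3_def)
qed

lemma cross_card:
  assumes "distinct xs" "distinct ys"
  shows "card {(i,j). i < length xs \<and> j < length ys \<and> ys!j < xs!i}
       = card {(u,v). u \<in> set xs \<and> v \<in> set ys \<and> v < u}"
proof -
  have "{(u,v). u \<in> set xs \<and> v \<in> set ys \<and> v < u} =
        (\<lambda>(i,j). (xs!i, ys!j)) ` {(i,j). i < length xs \<and> j < length ys \<and> ys!j < xs!i}"
    by (auto simp: in_set_conv_nth image_iff)
  moreover have "inj_on (\<lambda>(i,j). (xs!i, ys!j)) {(i,j). i < length xs \<and> j < length ys \<and> ys!j < xs!i}"
    using assms by (auto simp: inj_on_def nth_eq_iff_index_eq)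
  ultimately show ?thesis by (simp add: card_image)
qed

lemma word_sign_append:
  assumes "distinct xs" "distinct ys"
  shows "(word_sign (xs @ ys) :: 'k::field) = word_sign xs * word_sign ys *
     (-1) ^ card {(u,v). u \<in> set xs \<and> v \<in> set ys \<and> v < u}"
  unfolding word_sign_def inversions_append cross_card[OF assms] by (simp add: power_add)

lemma insort_key_front:
  "(\<forall>y\<in>set ys. f x \<le> f y) \<Longrightarrow> insort_key f x ys = x # ys"
  by (cases ys) auto

lemma inversions_sorted:
  "inversions (sorted_list_of_set I) = 0"
proof -
  have "sorted_wrt (<) (sorted_list_of_set I)" by simp
  then have E: "{(i, j). i < j \<and> j < length (sorted_list_of_set I) \<and>
        sorted_list_of_set I ! j < sorted_list_of_set I ! i} = {}"
    unfolding sorted_wrt_iff_nth_less by (auto dest: less_asym)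
  show ?thesis unfolding inversions_def E by simp
qed


lemma lo: "class.linorder ((\<le>) :: 'a::linorder \<Rightarrow> _) (<)" by unfold_locales

lemma ik_eq: "linorder.insort_key (\<le>) (f :: 'b \<Rightarrow> 'a::linorder) = insort_key f"
proof (intro ext)
  fix x xs show "linorder.insort_key (\<le>) f x xs = insort_key f x xs"
    by (induction xs) (simp_all add: linorder.insort_key.simps[OF lo])
qed

lemma skl_eq: "linorder.sorted_key_list_of_set (\<le>) (f :: 'b \<Rightarrow> 'a::linorder) = sorted_key_list_of_set f"
  unfolding linorder.sorted_key_list_of_set_def[OF lo] linorder_class.sorted_key_list_of_set_def ik_eq ..

lemma pw_props:
  fixes I :: "'b::linorder set"
  assumes fin: "finite Q" and blocks: "\<forall>J\<in>insert I Q. finite J \<and> J \<noteq> {}"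
    and disj: "\<forall>J\<in>insert I Q. \<forall>J'\<in>insert I Q. J \<noteq> J' \<longrightarrow> J \<inter> J' = {}"
    and notin: "I \<notin> Q" and le: "\<forall>J\<in>Q. Min I \<le> Min J"
  shows "partition_word (insert I Q) = sorted_list_of_set I @ partition_word Q"
    and "set (partition_word Q) = \<Union>Q" and "distinct (partition_word Q)"
proof -
  have inj: "inj_on Min (insert I Q)"
  proof (rule inj_onI)
    fix J J' assume J: "J \<in> insert I Q" "J' \<in> insert I Q" "Min J = Min J'"
    have "finite J" "J \<noteq> {}" "finite J'" "J' \<noteq> {}" using J(1,2) blocks by blast+
    then have "Min J \<in> J" "Min J' \<in> J'" by (simp_all add: Min_in)
    then have "J \<inter> J' \<noteq> {}" using J by auto
    then show "J = J'" using disj J by blast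
  qed
  interpret F: folding_insort_key "(\<le>)" "(<)" "insert I Q" Min
    rewrites "linorder.sorted_key_list_of_set (\<le>) Min = sorted_key_list_of_set Min"
      and "linorder.insort_key (\<le>) Min = insort_key Min"
  proof -
    show "folding_insort_key (\<le>) (<) (insert I Q) Min" by standard (rule inj)
  qed (simp_all add: skl_eq ik_eq)
  have sQ: "set (sorted_key_list_of_set Min Q) = Q" using fin by (intro F.set_sorted_key_list_of_set) auto
  have "sorted_key_list_of_set Min (insert I Q) = insort_key Min I (sorted_key_list_of_set Min Q)"
    using fin notin by (intro F.sorted_key_list_of_set_insert) auto
  also have "\<dots> = I # sorted_key_list_of_set Min Q"
    using le sQ by (intro insort_key_front) auto
  finally show "partition_word (insert I Q) = sorted_list_of_set I @ partition_word Q"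
    unfolding partition_word_def by simp
  show "set (partition_word Q) = \<Union>Q"
    unfolding partition_word_def using sQ blocks by auto
  have dQ: "distinct (sorted_key_list_of_set Min Q)"
    using F.distinct_sorted_key_list_of_set[of Q] by (auto simp: distinct_map)
  have injs: "inj_on sorted_list_of_set Q"
    using blocks by (auto simp: inj_on_def dest: sorted_list_of_set_inject)
  show "distinct (partition_word Q)"
    unfolding partition_word_def
  proof (rule distinct_concat)
    show "distinct (map sorted_list_of_set (sorted_key_list_of_set Min Q))"
      using dQ injs sQ by (simp add: distinct_map)
  next
    fix ys assume "ys \<in> set (map sorted_list_of_set (sorted_key_list_of_set Min Q))"
    then show "distinct ys" by auto
  next
    fix ys zs assume "ys \<in> set (map sorted_list_of_set (sorted_key_list_of_set Min Q))"
      "zs \<in> set (map sorted_list_of_set (sorted_key_list_of_set Min Q))" "ys \<noteq> zs"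
    then obtain J J' where "J \<in> Q" "J' \<in> Q" "ys = sorted_list_of_set J" "zs = sorted_list_of_set J'"
      using sQ by auto
    moreover have "finite J" "finite J'" using \<open>J \<in> Q\<close> \<open>J' \<in> Q\<close> blocks by auto
    ultimately have "set ys = J" "set zs = J'" "J \<noteq> J'" using \<open>ys \<noteq> zs\<close> by auto
    then show "set ys \<inter> set zs = {}" using disj \<open>J \<in> Q\<close> \<open>J' \<in> Q\<close> by blast
  qed
qed


lemma finite_m_partitions: "finite A \<Longrightarrow> finite (m_partitions m A)"
  by (rule finite_subset[of _ "Pow (Pow A)"]) (auto simp: m_partitions_def)

lemma m_partitions_finite_block:
  "P \<in> m_partitions m A \<Longrightarrow> finite A \<Longrightarrow> finite P"
  by (rule finite_subset[of _ "Pow A"]) (auto simp: m_partitions_def)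

lemma hpf_step:
  fixes A :: "'b::linorder set" and x :: "'b set \<Rightarrow> 'k::field"
  assumes finA: "finite A" and neA: "A \<noteq> {}" and m1: "m \<ge> 1"
    and zero: "\<And>I. I \<subseteq> A \<Longrightarrow> Min A \<in> I \<Longrightarrow> card I = m \<Longrightarrow> hpf m l (A - I) x = 0"
  shows "hpf m k A x = 0"
proof -
  define a where "a = Min A"
  have aA: "a \<in> A" using finA neA by (simp add: a_def)
  define S where "S = {I. I \<subseteq> A \<and> a \<in> I \<and> card I = m}"
  define M where "M = m_partitions m A"
  define g where "g P = (word_sign (partition_word P) :: 'k) * (\<Prod>I\<in>P. x I)" for P
  have finM: "finite M" using finA by (simp add: M_def finite_m_partitions)
  have finS: "finite S" by (rule finite_subset[of _ "Pow A"]) (auto simp: S_def finA)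
  have single: "{I \<in> S. I \<in> P} = {THE I. I \<in> P \<and> a \<in> I}" if "P \<in> M" for P
  proof -
    from that aA obtain I0 where I0: "I0 \<in> P" "a \<in> I0" by (auto simp: M_def m_partitions_def)
    have uniq: "I = I0" if "I \<in> P" "a \<in> I" for I
      using that I0 \<open>P \<in> M\<close> unfolding M_def m_partitions_def by blast
    have T: "(THE I. I \<in> P \<and> a \<in> I) = I0"
    proof (rule the_equality)
      show "I0 \<in> P \<and> a \<in> I0" using I0 by simp
    next
      fix I assume "I \<in> P \<and> a \<in> I" then show "I = I0" using uniq by blast
    qed
    have "\<forall>J\<in>P. J \<subseteq> A \<and> card J = m" using \<open>P \<in> M\<close> unfolding M_def m_partitions_def by blast
    then have "I0 \<in> S" using I0 unfolding S_def by blast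
    then show ?thesis unfolding T using uniq I0 unfolding S_def by blast
  qed
  have "hpf m k A x = (\<Sum>P\<in>M. g P)" by (simp add: hpf_def M_def g_def)
  also have "\<dots> = (\<Sum>P\<in>M. \<Sum>I\<in>{I \<in> S. I \<in> P}. g P)"
    by (rule sum.cong) (auto simp: single)
  also have "\<dots> = (\<Sum>I\<in>S. \<Sum>P\<in>{P \<in> M. I \<in> P}. g P)"
    by (rule sum.swap_restrict[OF finM finS])
  also have "\<dots> = 0"
  proof (rule sum.neutral, rule ballI)
    fix I assume IS: "I \<in> S"
    then have IA: "I \<subseteq> A" and aI: "a \<in> I" and cI: "card I = m" by (auto simp: S_def)
    have finI: "finite I" using IA finA finite_subset by blast
    have neI: "I \<noteq> {}" using aI by auto
    have MinI: "Min I = a"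
      using finI aI IA finA by (metis Min_in Min_le a_def antisym neI subsetD)
    define c where "c = (word_sign (sorted_list_of_set I) :: 'k) *
        (-1) ^ card {(u,v). u \<in> set (sorted_list_of_set I) \<and> v \<in> A - I \<and> v < u}"
    have bij: "bij_betw (insert I) (m_partitions m (A - I)) {P \<in> M. I \<in> P}"
    proof (rule bij_betw_byWitness[where f' = "\<lambda>P. P - {I}"])
      show "\<forall>Q\<in>m_partitions m (A - I). insert I Q - {I} = Q"
        using IA neI by (auto simp: m_partitions_def)
      show "\<forall>P\<in>{P \<in> M. I \<in> P}. insert I (P - {I}) = P" by auto
      show "insert I ` m_partitions m (A - I) \<subseteq> {P \<in> M. I \<in> P}"
      proof
        fix P assume "P \<in> insert I ` m_partitions m (A - I)"
        then obtain Q where Q: "Q \<in> m_partitions m (A - I)" "P = insert I Q" by blast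
        then have Qd: "\<forall>J\<in>Q. J \<subseteq> A - I \<and> card J = m" "\<Union>Q = A - I"
          "\<forall>J\<in>Q. \<forall>J'\<in>Q. J \<noteq> J' \<longrightarrow> J \<inter> J' = {}"
          unfolding m_partitions_def by blast+
        have "\<forall>J\<in>P. J \<subseteq> A \<and> card J = m" using Qd(1) IA cI Q(2) by blast
        moreover have "\<Union>P = A" using Qd(2) IA Q(2) by blast
        moreover have "\<forall>J\<in>P. \<forall>J'\<in>P. J \<noteq> J' \<longrightarrow> J \<inter> J' = {}"
          using Qd(1,3) Q(2) by blast
        ultimately show "P \<in> {P \<in> M. I \<in> P}" using Q(2) unfolding M_def m_partitions_def by blast
      qed
      show "(\<lambda>P. P - {I}) ` {P \<in> M. I \<in> P} \<subseteq> m_partitions m (A - I)"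
      proof
        fix Q assume "Q \<in> (\<lambda>P. P - {I}) ` {P \<in> M. I \<in> P}"
        then obtain P where P: "P \<in> M" "I \<in> P" "Q = P - {I}" by auto
        then have Pd: "\<forall>J\<in>P. \<forall>J'\<in>P. J \<noteq> J' \<longrightarrow> J \<inter> J' = {}" "\<Union>P = A"
          "\<forall>J\<in>P. J \<subseteq> A \<and> card J = m"
          by (auto simp: M_def m_partitions_def)
        have "\<forall>J\<in>Q. J \<subseteq> A - I \<and> card J = m" using Pd P by blast
        moreover have "\<Union>Q = A - I" using Pd P by blast
        ultimately show "Q \<in> m_partitions m (A - I)"
          using Pd P by (auto simp: m_partitions_def)
      qed
    qed
    have eq: "g (insert I Q) = c * x I * (word_sign (partition_word Q) * (\<Prod>J\<in>Q. x J))"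
      if Q: "Q \<in> m_partitions m (A - I)" for Q
    proof -
      have finQ: "finite Q" using Q finA m_partitions_finite_block by blast
      have Qd: "\<forall>J\<in>Q. J \<subseteq> A - I \<and> card J = m" "\<Union>Q = A - I"
        "\<forall>J\<in>Q. \<forall>J'\<in>Q. J \<noteq> J' \<longrightarrow> J \<inter> J' = {}"
        using Q by (auto simp: m_partitions_def)
      have blocks: "\<forall>J\<in>insert I Q. finite J \<and> J \<noteq> {}"
        using Qd finI neI m1 by (auto simp: card_ge_0_finite)
      have disj: "\<forall>J\<in>insert I Q. \<forall>J'\<in>insert I Q. J \<noteq> J' \<longrightarrow> J \<inter> J' = {}"
        using Qd by blast
      have notin: "I \<notin> Q" using Qd neI by blast
      have le: "\<forall>J\<in>Q. Min I \<le> Min J"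
      proof
        fix J assume "J \<in> Q"
        then have "Min J \<in> A" using blocks Qd by (metis Diff_subset Min_in insert_iff subset_iff)
        then show "Min I \<le> Min J" using MinI finA by (simp add: a_def)
      qed
      note pw = pw_props[OF finQ blocks disj notin le]
      have "g (insert I Q) = word_sign (sorted_list_of_set I @ partition_word Q) * (x I * (\<Prod>J\<in>Q. x J))"
        unfolding g_def pw(1) using finQ notin by simp
      also have "\<dots> = c * x I * (word_sign (partition_word Q) * (\<Prod>J\<in>Q. x J))"
        unfolding word_sign_append[OF distinct_sorted_list_of_set pw(3)] c_def pw(2) Qd(2)
        by (simp add: mult_ac)
      finally show ?thesis .
    qed
    have "(\<Sum>P\<in>{P \<in> M. I \<in> P}. g P) = (\<Sum>Q\<in>m_partitions m (A - I). g (insert I Q))"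
      by (rule sum.reindex_bij_betw[OF bij, symmetric])
    also have "\<dots> = (\<Sum>Q\<in>m_partitions m (A - I). c * x I * (word_sign (partition_word Q) * (\<Prod>J\<in>Q. x J)))"
      by (rule sum.cong) (auto simp: eq)
    also have "\<dots> = c * x I * hpf m l (A - I) x"
      by (simp add: hpf_def sum_distrib_left)
    also have "\<dots> = 0" using zero IA aI cI by (simp add: a_def)
    finally show "(\<Sum>P\<in>{P \<in> M. I \<in> P}. g P) = 0" .
  qed
  finally show ?thesis .
qed


lemma hpf1:
  fixes A :: "'b::linorder set" and x :: "'b set \<Rightarrow> 'k::field"
  assumes finA: "finite A" and cA: "card A = m" and m1: "m \<ge> 1"
  shows "hpf m k A x = x A"
proof -
  have neA: "A \<noteq> {}" using cA m1 by auto
  have "m_partitions m A = {{A}}"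
  proof (intro equalityI subsetI)
    fix P assume P: "P \<in> m_partitions m A"
    then have "\<forall>I\<in>P. I \<subseteq> A \<and> card I = m" "\<Union>P = A" by (auto simp: m_partitions_def)
    then have "\<forall>I\<in>P. I = A" using finA cA by (metis card_subset_eq)
    moreover have "P \<noteq> {}" using \<open>\<Union>P = A\<close> neA by auto
    ultimately show "P \<in> {{A}}" by auto
  qed (use cA in \<open>auto simp: m_partitions_def\<close>)
  moreover have "partition_word {A} = sorted_list_of_set A"
  proof -
    note pw = pw_props[of "{}" A]
    have "partition_word ({} :: 'b set set) = []" using pw(2) finA neA by simp
    then show ?thesis using pw(1) finA neA by simp
  qed
  ultimately show ?thesis by (simp add: hpf_def word_sign_def inversions_sorted)
qed

theorem proposition3p17:
  fixes B :: "'b::linorder set" and m :: nat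
  assumes "finite B" and "even m" and "m \<ge> 2"
  shows "HPf m 1 B = {(\<lambda>I. 0 :: 'k::field)}
    \<and> (\<forall>l\<ge>1. (HPf m l B :: ('b set \<Rightarrow> 'k) set) \<subseteq> HPf m (l + 1) B)
    \<and> (\<forall>l\<ge>1. (HPf m l B :: ('b set \<Rightarrow> 'k) set) \<subseteq> wedge_space m B)
    \<and> (\<exists>L0. \<forall>L\<ge>L0. (HPf m L B :: ('b set \<Rightarrow> 'k) set) = wedge_space m B)"
proof (intro conjI)
  have m1: "m \<ge> 1" using assms by simp
  show "HPf m 1 B = {(\<lambda>I. 0 :: 'k::field)}"
  proof (intro equalityI subsetI)
    fix x :: "'b set \<Rightarrow> 'k" assume x: "x \<in> HPf m 1 B"
    have "x I = 0" for I
    proof (rule ccontr)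
      assume "x I \<noteq> 0"
      then have IB: "I \<subseteq> B" "card I = m" using x by (auto simp: HPf_def wedge_space_def)
      then have "hpf m 1 I x = 0" using x by (auto simp: HPf_def)
      moreover have "finite I" using IB assms(1) finite_subset by blast
      ultimately show False using hpf1[of I m 1 x] IB m1 \<open>x I \<noteq> 0\<close> by simp
    qed
    then show "x \<in> {\<lambda>I. 0}" by auto
  next
    fix x :: "'b set \<Rightarrow> 'k" assume "x \<in> {\<lambda>I. 0}"
    then have x0: "x = (\<lambda>I. 0)" by simp
    have "hpf m 1 A x = 0" if "A \<subseteq> B" "card A = m * 1" for A
      using hpf1[of A m 1 x] that m1 assms(1) finite_subset x0 by fastforce
    then show "x \<in> HPf m 1 B" using x0 by (auto simp: HPf_def wedge_space_def)
  qed
  show "\<forall>l\<ge>1. (HPf m l B :: ('b set \<Rightarrow> 'k) set) \<subseteq> HPf m (l + 1) B"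
  proof (intro allI impI subsetI)
    fix l :: nat and x :: "'b set \<Rightarrow> 'k" assume l: "l \<ge> 1" and x: "x \<in> HPf m l B"
    have "hpf m (l+1) A x = 0" if A: "A \<subseteq> B" "card A = m * (l+1)" for A
    proof (rule hpf_step[where l = l])
      show finA: "finite A" using A assms(1) finite_subset by blast
      show "A \<noteq> {}" using A m1 by auto
      show "m \<ge> 1" by (rule m1)
      fix I assume I: "I \<subseteq> A" "Min A \<in> I" "card I = m"
      have "card (A - I) = m * l" using I A finA by (simp add: card_Diff_subset finite_subset)
      moreover have "A - I \<subseteq> B" using A by auto
      ultimately show "hpf m l (A - I) x = 0" using x by (auto simp: HPf_def)
    qed
    then show "x \<in> HPf m (l + 1) B" using x by (auto simp: HPf_def)
  qed
  show "\<forall>l\<ge>1. (HPf m l B :: ('b set \<Rightarrow> 'k) set) \<subseteq> wedge_space m B"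
    by (auto simp: HPf_def)
  show "\<exists>L0. \<forall>L\<ge>L0. (HPf m L B :: ('b set \<Rightarrow> 'k) set) = wedge_space m B"
  proof (intro exI allI impI)
    fix L assume L: "L \<ge> card B + 1"
    have "\<not> (A \<subseteq> B \<and> card A = m * L)" for A
    proof
      assume A: "A \<subseteq> B \<and> card A = m * L"
      then have "card A \<le> card B" using assms(1) card_mono by blast
      moreover have "m * L \<ge> L" using m1 by simp
      ultimately show False using A L by linarith
    qed
    then show "(HPf m L B :: ('b set \<Rightarrow> 'k) set) = wedge_space m B"
      by (auto simp: HPf_def)
  qed
qed

end
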